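(* Let $\mathbb{K}=(K,+,\times,0,1)$ be a semiring. The following are equivalent: (1) $\mathbb{K}$ is additively absorptive and multiplicatively idempotent; (2) $\mathbb{K}$ is additively positive and the inner consistency property holds for $\mathbb{K}$-relations via the standard $\mathbb{K}$-join.
   Context: A semiring: $(K,+,0)$ and $(K,\times,1)$ commutative monoids, $\times$ distributes over $+$, $0\times p=0$. Additively positive: $p+q=0$ implies $p=q=0$. Additively absorptive: $p+p\times q=p$ for all $p,q$. Multiplicatively idempotent: $p\times p=p$ for all $p$. Attributes have domains (arbitrary sets); for a finite attribute set $X$, an $X$-tuple assigns each attribute a value in its domain; $t[Y]$ is restriction. A $\mathbb{K}$-relation over $X$ is a function $R$ from $X$-tuples to $K$ with finite support $R'$; marginals $R[Y](t)=\sum_{r\in R',r[Y]=t}R(r)$. $R(X),S(Y)$ are inner consistent if $R[X\cap Y]=S[X\cap Y]$. The standard $\mathbb{K}$-join of $R(X)$ and $S(Y)$ is the $\mathbb{K}$-relation $W$ over $X\cup Y$ with $W(t)=R(t[X])\times S(t[Y])$. The inner consistency property holds for $\mathbb{K}$-relations via the standard $\mathbb{K}$-join if for any two inner consistent $\mathbb{K}$-relations $R(X),S(Y)$, their standard $\mathbb{K}$-join $W$ satisfies $W[X]=R$ and $W[Y]=S$. *)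

theory Defs
  imports Main "HOL-Library.FuncSet" "HOL-Library.Infinite_Typeclass"
begin

definition add_positive :: "'k::{comm_semiring_0,comm_monoid_mult} itself \<Rightarrow> bool" where
  "add_positive _ \<longleftrightarrow> (\<forall>p q::'k. p + q = 0 \<longrightarrow> p = 0 \<and> q = 0)"

definition add_absorptive :: "'k::{comm_semiring_0,comm_monoid_mult} itself \<Rightarrow> bool" where
  "add_absorptive _ \<longleftrightarrow> (\<forall>p q::'k. p + p * q = p)"

definition mult_idempotent :: "'k::{comm_semiring_0,comm_monoid_mult} itself \<Rightarrow> bool" where
  "mult_idempotent _ \<longleftrightarrow> (\<forall>p::'k. p * p = p)"

definition tuples :: "('at \<Rightarrow> 'v set) \<Rightarrow> 'at set \<Rightarrow> ('at \<Rightarrow> 'v) set" where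
  "tuples Dom X = PiE X Dom"

definition krel :: "('at \<Rightarrow> 'v set) \<Rightarrow> 'at set \<Rightarrow> (('at \<Rightarrow> 'v) \<Rightarrow> 'k::zero) \<Rightarrow> bool" where
  "krel Dom X R \<longleftrightarrow> (\<forall>t. t \<notin> tuples Dom X \<longrightarrow> R t = 0) \<and> finite {t. R t \<noteq> 0}"

definition marginal :: "(('at \<Rightarrow> 'v) \<Rightarrow> 'k::comm_monoid_add) \<Rightarrow> 'at set \<Rightarrow> ('at \<Rightarrow> 'v) \<Rightarrow> 'k" where
  "marginal R Y t = (\<Sum>r\<in>{r. R r \<noteq> 0 \<and> restrict r Y = t}. R r)"

definition inner_consistent ::
  "'at set \<Rightarrow> (('at \<Rightarrow> 'v) \<Rightarrow> 'k::comm_monoid_add) \<Rightarrow> 'at set \<Rightarrow> (('at \<Rightarrow> 'v) \<Rightarrow> 'k) \<Rightarrow> bool" where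
  "inner_consistent X R Y S \<longleftrightarrow> marginal R (X \<inter> Y) = marginal S (Y \<inter> X)"

definition std_join ::
  "('at \<Rightarrow> 'v set) \<Rightarrow> 'at set \<Rightarrow> (('at \<Rightarrow> 'v) \<Rightarrow> 'k::{comm_semiring_0,comm_monoid_mult})
     \<Rightarrow> 'at set \<Rightarrow> (('at \<Rightarrow> 'v) \<Rightarrow> 'k) \<Rightarrow> ('at \<Rightarrow> 'v) \<Rightarrow> 'k" where
  "std_join Dom X R Y S t =
     (if t \<in> tuples Dom (X \<union> Y) then R (restrict t X) * S (restrict t Y) else 0)"

definition inner_consistency_property ::
  "'k::{comm_semiring_0,comm_monoid_mult} itself \<Rightarrow> 'at itself \<Rightarrow> 'v itself \<Rightarrow> bool" where
  "inner_consistency_property _ _ _ \<longleftrightarrow>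
     (\<forall>(Dom :: 'at \<Rightarrow> 'v set) (X :: 'at set) (Y :: 'at set)
        (R :: ('at \<Rightarrow> 'v) \<Rightarrow> 'k) (S :: ('at \<Rightarrow> 'v) \<Rightarrow> 'k).
        finite X \<and> finite Y \<and> krel Dom X R \<and> krel Dom Y S \<and> inner_consistent X R Y S \<longrightarrow>
        marginal (std_join Dom X R Y S) X = R \<and> marginal (std_join Dom X R Y S) Y = S)"

end

theory Submission
  imports Defs "HOL-Library.Infinite_Typeclass"
begin

lemma restrict_PiE_sub:
  "r \<in> PiE (X \<union> Y) Dom \<Longrightarrow> restrict r X \<in> PiE X Dom"
  by (auto simp: PiE_iff)

lemma fwd:
  fixes R S :: "('at \<Rightarrow> 'v) \<Rightarrow> 'k::{comm_semiring_0,comm_monoid_mult}"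
  assumes ab: "\<forall>p q::'k. p + p*q = p" and idm: "\<forall>p::'k. p*p = p"
    and kR: "krel Dom X R" and kS: "krel Dom Y S"
    and ic: "marginal R (X\<inter>Y) = marginal S (Y\<inter>X)"
  shows "marginal (std_join Dom X R Y S) X = R"
proof -
  define W where "W = std_join Dom X R Y S"
  have R0: "\<And>r. r \<notin> PiE X Dom \<Longrightarrow> R r = 0" and finR: "finite {r. R r \<noteq> 0}"
    using kR by (auto simp: krel_def tuples_def)
  have S0: "\<And>r. r \<notin> PiE Y Dom \<Longrightarrow> S r = 0" and finS: "finite {r. S r \<noteq> 0}"
    using kS by (auto simp: krel_def tuples_def)
  have Wsupp: "\<And>r. W r \<noteq> 0 \<Longrightarrow> r \<in> PiE (X \<union> Y) Dom"
    by (auto simp: W_def std_join_def tuples_def split: if_splits)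
  have Wval: "\<And>r. r \<in> PiE (X \<union> Y) Dom \<Longrightarrow> W r = R (restrict r X) * S (restrict r Y)"
    by (auto simp: W_def std_join_def tuples_def)
  have "marginal W X t = R t" for t
  proof (cases "t \<in> PiE X Dom")
    case False
    have "{r. W r \<noteq> 0 \<and> restrict r X = t} = {}"
      using Wsupp restrict_PiE_sub False by (smt (verit) empty_iff mem_Collect_eq subsetI subset_antisym)
    then show ?thesis using R0[OF False] by (simp only: marginal_def sum.empty)
  next
    case True
    define B where "B = {r \<in> PiE (X \<union> Y) Dom. restrict r X = t \<and> S (restrict r Y) \<noteq> 0}"
    define C where "C = {s. S s \<noteq> 0 \<and> restrict s (Y\<inter>X) = restrict t (X\<inter>Y)}"
    have AB: "{r. W r \<noteq> 0 \<and> restrict r X = t} \<subseteq> B"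
      using Wsupp Wval unfolding B_def by fastforce
    have inj: "inj_on (\<lambda>r. restrict r Y) B"
    proof (rule inj_onI)
      fix r1 r2 assume r1: "r1 \<in> B" and r2: "r2 \<in> B" and eq: "restrict r1 Y = restrict r2 Y"
      show "r1 = r2"
      proof
        fix a
        show "r1 a = r2 a"
        proof (cases "a \<in> X")
          case True
          then show ?thesis using r1 r2 unfolding B_def
            by (metis (mono_tags, lifting) mem_Collect_eq restrict_apply')
        next
          case nX: False
          show ?thesis
          proof (cases "a \<in> Y")
            case True
            then show ?thesis using eq by (metis restrict_apply')
          next
            case False
            then show ?thesis using nX r1 r2 unfolding B_def
              by (metis (no_types, lifting) PiE_arb UnE mem_Collect_eq)
          qed
        qed
      qed
    qed
    have img: "(\<lambda>r. restrict r Y) ` B = C"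
    proof
      show "(\<lambda>r. restrict r Y) ` B \<subseteq> C"
      proof
        fix s assume "s \<in> (\<lambda>r. restrict r Y) ` B"
        then obtain r where r: "r \<in> B" and s: "s = restrict r Y" by blast
        have rt: "\<And>a. a \<in> X \<Longrightarrow> r a = t a" using r unfolding B_def
          by (metis (mono_tags, lifting) mem_Collect_eq restrict_apply')
        have "restrict s (Y\<inter>X) = restrict t (X\<inter>Y)"
          unfolding s using rt by (auto simp: fun_eq_iff)
        then show "s \<in> C" using r unfolding s B_def C_def by auto
      qed
    next
      show "C \<subseteq> (\<lambda>r. restrict r Y) ` B"
      proof
        fix s assume s: "s \<in> C"
        then have sP: "s \<in> PiE Y Dom" using S0 unfolding C_def by blast
        have eqr: "restrict s (Y\<inter>X) = restrict t (X\<inter>Y)" using s unfolding C_def by simp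
        have st: "s a = t a" if "a \<in> X" "a \<in> Y" for a
        proof -
          have "restrict s (Y\<inter>X) a = restrict t (X\<inter>Y) a" using eqr by simp
          then show ?thesis using that by simp
        qed
        define r where "r = (\<lambda>a. if a \<in> X then t a else s a)"
        have tE: "\<And>a. a \<notin> X \<Longrightarrow> t a = undefined" using PiE_arb[OF True] by blast
        have sE: "\<And>a. a \<notin> Y \<Longrightarrow> s a = undefined" using PiE_arb[OF sP] by blast
        have rX: "restrict r X = t"
        proof
          fix a show "restrict r X a = t a" using tE[of a] by (simp add: r_def)
        qed
        have rY: "restrict r Y = s"
        proof
          fix a show "restrict r Y a = s a" using sE[of a] st[of a] by (simp add: r_def)
        qed
        have rP: "r \<in> PiE (X \<union> Y) Dom"
        proof (rule PiE_I)
          fix a assume "a \<in> X \<union> Y"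
          then show "r a \<in> Dom a" using True sP unfolding r_def by (auto simp: PiE_iff)
        next
          fix a assume "a \<notin> X \<union> Y"
          then show "r a = undefined" using tE sE unfolding r_def by simp
        qed
        have "r \<in> B" using rX rY rP s unfolding B_def C_def by auto
        then show "s \<in> (\<lambda>r. restrict r Y) ` B" using rY by force
      qed
    qed
    have finC: "finite C" using finS unfolding C_def by (rule rev_finite_subset) auto
    have finB: "finite B" using finite_imageD[of "\<lambda>r. restrict r Y" B] inj img finC by simp
    have "marginal W X t = sum W B"
      unfolding marginal_def
      by (rule sum.mono_neutral_left[OF finB AB]) (auto simp: B_def)
    also have "\<dots> = sum (\<lambda>r. R t * S (restrict r Y)) B"
      by (rule sum.cong) (auto simp: B_def Wval)
    also have "\<dots> = R t * sum (\<lambda>r. S (restrict r Y)) B"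
      by (simp add: sum_distrib_left)
    also have "sum (\<lambda>r. S (restrict r Y)) B = sum S C"
      using sum.reindex[OF inj, of S] img by simp
    also have "sum S C = marginal S (Y\<inter>X) (restrict t (X\<inter>Y))"
      unfolding marginal_def C_def by simp
    also have "\<dots> = marginal R (X\<inter>Y) (restrict t (X\<inter>Y))" using ic by simp
    finally have eq: "marginal W X t = R t * marginal R (X\<inter>Y) (restrict t (X\<inter>Y))" .
    show ?thesis
    proof (cases "R t = 0")
      case True then show ?thesis using eq by simp
    next
      case False
      define D where "D = {r. R r \<noteq> 0 \<and> restrict r (X\<inter>Y) = restrict t (X\<inter>Y)}"
      have finD: "finite D" using finR unfolding D_def by (rule rev_finite_subset) auto
      have tD: "t \<in> D" using False unfolding D_def by simp
      have "marginal R (X\<inter>Y) (restrict t (X\<inter>Y)) = R t + sum R (D - {t})"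
        unfolding marginal_def D_def[symmetric] using sum.remove[OF finD tD] by simp
      then have "marginal W X t = R t * R t + R t * sum R (D - {t})"
        using eq by (simp add: distrib_left)
      also have "\<dots> = R t" using ab idm by simp
      finally show ?thesis .
    qed
  qed
  then show ?thesis unfolding W_def by (simp add: fun_eq_iff)
qed

lemma sum_supp:
  assumes "finite F" "\<And>r. r \<notin> F \<Longrightarrow> f r = 0"
  shows "sum f {r. f r \<noteq> 0 \<and> P r} = sum f {r\<in>F. P r}"
proof (rule sum.mono_neutral_left)
  show "finite {r \<in> F. P r}" using assms(1) by simp
  show "{r. f r \<noteq> 0 \<and> P r} \<subseteq> {r \<in> F. P r}" using assms(2) by blast
  show "\<forall>i\<in>{r \<in> F. P r} - {r. f r \<noteq> 0 \<and> P r}. f i = 0" by blast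
qed

lemma std_join_sym: "std_join Dom Y S X R = std_join Dom X R Y S"
  by (auto simp: fun_eq_iff std_join_def Un_commute mult.commute)

theorem proposition19:
  "(add_absorptive TYPE('k::{comm_semiring_0,comm_monoid_mult}) \<and> mult_idempotent TYPE('k))
   \<longleftrightarrow> (add_positive TYPE('k) \<and>
        inner_consistency_property TYPE('k) TYPE('at::infinite) TYPE('v::infinite))"
proof
  assume L: "add_absorptive TYPE('k) \<and> mult_idempotent TYPE('k)"
  have ab: "\<forall>p q::'k. p + p*q = p" using L by (simp add: add_absorptive_def)
  have idm: "\<forall>p::'k. p*p = p" using L by (simp add: mult_idempotent_def)
  have pp: "p + p = p" for p :: 'k using ab by (metis mult_1_right)
  have "add_positive TYPE('k)"
    unfolding add_positive_def
  proof (intro allI impI)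
    fix p q :: 'k assume h: "p + q = 0"
    have "p = p + (p + q)" using h by simp
    also have "\<dots> = (p + p) + q" by (simp add: add.assoc)
    also have "\<dots> = 0" using pp h by simp
    finally have p0: "p = 0" .
    have "q = q + (p + q)" using h by simp
    also have "\<dots> = (q + q) + p" by (simp add: add_ac)
    also have "\<dots> = 0" using pp h by (simp add: add.commute)
    finally show "p = 0 \<and> q = 0" using p0 by simp
  qed
  moreover have "inner_consistency_property TYPE('k) TYPE('at) TYPE('v)"
    unfolding inner_consistency_property_def
  proof (intro allI impI)
    fix Dom :: "'at \<Rightarrow> 'v set" and X Y :: "'at set" and R S :: "('at \<Rightarrow> 'v) \<Rightarrow> 'k"
    assume h: "finite X \<and> finite Y \<and> krel Dom X R \<and> krel Dom Y S \<and> inner_consistent X R Y S"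
    have ic: "marginal R (X\<inter>Y) = marginal S (Y\<inter>X)" using h by (simp add: inner_consistent_def)
    have 1: "marginal (std_join Dom X R Y S) X = R" using fwd[OF ab idm _ _ ic] h by blast
    have 2: "marginal (std_join Dom Y S X R) Y = S" using fwd[OF ab idm _ _ ic[symmetric]] h by blast
    show "marginal (std_join Dom X R Y S) X = R \<and> marginal (std_join Dom X R Y S) Y = S"
      using 1 2 std_join_sym by metis
  qed
  ultimately show "add_positive TYPE('k) \<and> inner_consistency_property TYPE('k) TYPE('at) TYPE('v)"
    by simp
next
  assume "add_positive TYPE('k) \<and> inner_consistency_property TYPE('k) TYPE('at) TYPE('v)"
  then have icp: "\<And>(Dom :: 'at \<Rightarrow> 'v set) (X :: 'at set) (Y :: 'at set)
        (R :: ('at \<Rightarrow> 'v) \<Rightarrow> 'k) (S :: ('at \<Rightarrow> 'v) \<Rightarrow> 'k).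
        finite X \<Longrightarrow> finite Y \<Longrightarrow> krel Dom X R \<Longrightarrow> krel Dom Y S \<Longrightarrow> inner_consistent X R Y S \<Longrightarrow>
        marginal (std_join Dom X R Y S) X = R \<and> marginal (std_join Dom X R Y S) Y = S"
    unfolding inner_consistency_property_def by blast
  obtain v1 :: 'v where True by simp
  obtain v2 :: 'v where v12: "v2 \<notin> {v1}" using arb_element[of "{v1}"] by auto
  define Dom where "Dom = (\<lambda>_::'at. {v1, v2})"
  define e where "e = (\<lambda>_::'at. undefined::'v)"
  have T0: "tuples Dom {} = {e}" by (simp add: tuples_def e_def)
  have re: "restrict r {} = e" for r :: "'at \<Rightarrow> 'v" by (simp add: e_def fun_eq_iff)
  have idm: "p * p = p" for p :: 'k
  proof -
    define R0 where "R0 = (\<lambda>r. if r = e then p else (0::'k))"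
    have k0: "krel Dom {} R0"
      unfolding krel_def T0 R0_def by (auto intro: rev_finite_subset[of "{e}"])
    have "marginal (std_join Dom {} R0 {} R0) {} = R0"
      using icp[OF _ _ k0 k0] by (simp add: inner_consistent_def)
    then have "marginal (std_join Dom {} R0 {} R0) {} e = R0 e" by simp
    moreover have "marginal (std_join Dom {} R0 {} R0) {} e = std_join Dom {} R0 {} R0 e"
      unfolding marginal_def
      by (subst sum_supp[of "{e}"]) (auto simp: std_join_def T0 re)
    moreover have "std_join Dom {} R0 {} R0 e = p * p"
      by (simp add: std_join_def T0 re R0_def)
    ultimately show ?thesis by (simp add: R0_def)
  qed
  have ab: "p + p * q = p" for p q :: 'k
  proof -
    define b where "b = (undefined :: 'at)"
    define s1 where "s1 = e(b := v1)"
    define s2 where "s2 = e(b := v2)"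
    have s12: "s1 \<noteq> s2" using v12 by (auto simp: s1_def s2_def fun_eq_iff)
    have T1: "tuples Dom {b} = {s1, s2}"
    proof
      show "{s1, s2} \<subseteq> tuples Dom {b}"
        by (auto simp: tuples_def Dom_def s1_def s2_def e_def PiE_iff extensional_def split: if_splits)
      show "tuples Dom {b} \<subseteq> {s1, s2}"
      proof
        fix x assume x: "x \<in> tuples Dom {b}"
        then have xb: "x b \<in> {v1, v2}" by (simp add: tuples_def Dom_def PiE_iff)
        have "x = e(b := x b)"
        proof
          fix a show "x a = (e(b := x b)) a"
            using PiE_arb[of x "{b}" Dom a] x by (cases "a = b") (auto simp: tuples_def e_def)
        qed
        then show "x \<in> {s1, s2}" using xb unfolding s1_def s2_def by auto
      qed
    qed
    define R1 where "R1 = (\<lambda>r. if r = e then p + p * q else (0::'k))"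
    define S1 where "S1 = (\<lambda>r. if r = s1 then p else if r = s2 then p * q else (0::'k))"
    have kR: "krel Dom {} R1"
      unfolding krel_def T0 R1_def by (auto intro: rev_finite_subset[of "{e}"])
    have kS: "krel Dom {b} S1"
      unfolding krel_def T1 S1_def using s12 by (auto intro: rev_finite_subset[of "{s1,s2}"])
    have mR: "marginal R1 {} u = (if u = e then p + p * q else 0)" for u
      unfolding marginal_def
      by (subst sum_supp[of "{e}"]) (auto simp: R1_def re)
    have mS: "marginal S1 {} u = (if u = e then p + p * q else 0)" for u
    proof -
      have "marginal S1 {} u = sum S1 {r \<in> {s1, s2}. restrict r {} = u}"
        unfolding marginal_def
        by (subst sum_supp[of "{s1,s2}"]) (auto simp: S1_def)
      also have "\<dots> = (if u = e then p + p * q else 0)"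
      proof (cases "u = e")
        case True
        then have "{r \<in> {s1, s2}. restrict r {} = u} = {s1, s2}" by (auto simp: re)
        then show ?thesis using True s12 by (simp add: S1_def)
      next
        case False
        have E: "{r \<in> {s1, s2}. restrict r {} = u} = {}" using False by (auto simp: re)
        show ?thesis by (subst E) (simp add: False)
      qed
      finally show ?thesis .
    qed
    have ic: "inner_consistent {} R1 {b} S1"
      unfolding inner_consistent_def using mR mS by (simp add: fun_eq_iff)
    have "marginal (std_join Dom {} R1 {b} S1) {b} = S1"
      using icp[OF _ _ kR kS ic] by simp
    then have "marginal (std_join Dom {} R1 {b} S1) {b} s1 = p" by (simp add: S1_def)
    moreover have "marginal (std_join Dom {} R1 {b} S1) {b} s1 = std_join Dom {} R1 {b} S1 s1"
    proof -
      have "marginal (std_join Dom {} R1 {b} S1) {b} s1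
          = sum (std_join Dom {} R1 {b} S1) {r \<in> {s1, s2}. restrict r {b} = s1}"
        unfolding marginal_def
        by (subst sum_supp[of "{s1,s2}"]) (auto simp: std_join_def T1)
      also have "{r \<in> {s1, s2}. restrict r {b} = s1} = {s1}"
        using s12 by (auto simp: s1_def s2_def e_def fun_eq_iff)
      finally show ?thesis by simp
    qed
    moreover have "std_join Dom {} R1 {b} S1 s1 = (p + p * q) * p"
    proof -
      have "restrict s1 {b} = s1" by (auto simp: s1_def e_def fun_eq_iff)
      then show ?thesis by (simp add: std_join_def T1 re R1_def S1_def)
    qed
    moreover have "(p + p * q) * p = p + p * q"
      by (simp add: distrib_right idm mult.assoc mult.left_commute[of q p] ) (metis idm mult.assoc mult.commute)
    ultimately show ?thesis by simp
  qed
  show "add_absorptive TYPE('k) \<and> mult_idempotent TYPE('k)"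
    using ab idm by (simp add: add_absorptive_def mult_idempotent_def)
qed

end
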